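(* Let $A$ be a finite set of positive integers. Then $A$ is relatively prime if and only if there exists an $\mathcal{N}$-set $K \subseteq \mathbb{R}$ such that $A = (K-K)\cap \mathbb{N}$.
   Context: $\mathbb{N}$ denotes the set of positive integers. A set $A$ of integers is relatively prime if $A$ is nonempty and its elements have no common factor greater than $1$ (equivalently, $A$ generates the additive group $\mathbb{Z}$). For $K \subseteq \mathbb{R}^n$, $K-K=\{x-y : x,y\in K\}$. An $\mathcal{N}$-set in $\mathbb{R}^n$ is a compact set $K\subseteq\mathbb{R}^n$ such that for every $x\in\mathbb{R}^n$ there exists $y\in K$ with $x-y\in\mathbb{Z}^n$. *)

theory Defs
  imports "HOL-Analysis.Analysis"
begin

definition rel_prime_set :: "int set \<Rightarrow> bool" where
  "rel_prime_set A \<longleftrightarrow> A \<noteq> {} \<and> (\<forall>d::int. d > 1 \<longrightarrow> \<not> (\<forall>a\<in>A. d dvd a))"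

definition N_set :: "real set \<Rightarrow> bool" where
  "N_set K \<longleftrightarrow> compact K \<and> (\<forall>x::real. \<exists>y\<in>K. x - y \<in> \<int>)"

definition diff_set :: "real set \<Rightarrow> real set" where
  "diff_set K = {x - y | x y. x \<in> K \<and> y \<in> K}"

end

theory Submission
  imports Defs
begin

lemma key_int:
  fixes z M a :: int
  assumes "M \<ge> 3" "a - 1 \<le> z*M" "z*M \<le> a+1" "-(M-1) \<le> a" "a \<le> M-1"
  shows "(z=0 \<and> -1 \<le> a \<and> a \<le> 1) \<or> (z=1 \<and> a = M-1) \<or> (z=-1 \<and> a = -(M-1))"
proof -
  consider "z \<ge> 2" | "z = 1" | "z = 0" | "z = -1" | "z \<le> -2" by linarith
  then show ?thesis
  proof cases
    case 1
    then have "z*M \<ge> 2*M" using assms(1) by (intro mult_right_mono) auto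
    then show ?thesis using assms by linarith
  next
    case 5
    then have "z*M \<le> (-2)*M" using assms(1) by (intro mult_right_mono) auto
    then show ?thesis using assms by linarith
  qed (use assms in auto)
qed

lemma closed_int_subset:
  assumes "S \<subseteq> \<int>"
  shows "closed (S :: real set)"
proof (rule discrete_imp_closed[of 1])
  show "\<forall>x\<in>S. \<forall>y\<in>S. dist y x < 1 \<longrightarrow> y = x"
  proof (intro ballI impI)
    fix x y assume "x \<in> S" "y \<in> S" "dist y x < 1"
    then obtain a b where "x = of_int a" "y = of_int b" using assms by (meson Ints_cases subsetD)
    with \<open>dist y x < 1\<close> have "\<bar>b - a\<bar> < 1" unfolding dist_real_def
      by (metis of_int_abs of_int_diff of_int_less_1_iff)
    then show "y = x" using \<open>x = _\<close> \<open>y = _\<close> by auto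
  qed
qed simp

lemma backward:
  fixes d :: int
  assumes N: "N_set K" and d: "d > 1"
    and dv: "\<And>n. n > 0 \<Longrightarrow> real_of_int n \<in> diff_set K \<Longrightarrow> d dvd n"
  shows False
proof -
  have cK: "compact K" and cov: "\<And>x. \<exists>y\<in>K. x - y \<in> \<int>" using N unfolding N_set_def by auto
  define D0 where "D0 = {real_of_int w | w. d dvd w}"
  define D1 where "D1 = {real_of_int w | w. \<not> d dvd w}"
  define T0 where "T0 = (\<Union>x\<in>D0. \<Union>y\<in>K. {x + y})"
  define T1 where "T1 = (\<Union>x\<in>D1. \<Union>y\<in>K. {x + y})"
  have "closed D0" "closed D1" unfolding D0_def D1_def by (auto intro!: closed_int_subset)
  then have c0: "closed T0" and c1: "closed T1" unfolding T0_def T1_def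
    using closed_compact_sums cK by blast+
  have cover: "UNIV \<subseteq> T0 \<union> T1"
  proof
    fix x :: real
    obtain y where "y \<in> K" "x - y \<in> \<int>" using cov by blast
    then obtain w where w: "x - y = of_int w" by (auto elim: Ints_cases)
    have "x = of_int w + y" using w by simp
    then show "x \<in> T0 \<union> T1" unfolding T0_def T1_def D0_def D1_def using \<open>y \<in> K\<close>
      by (cases "d dvd w") blast+
  qed
  have disj: "T0 \<inter> T1 = {}"
  proof (rule ccontr)
    assume "T0 \<inter> T1 \<noteq> {}"
    then obtain w1 w2 k1 k2 where "d dvd w1" "\<not> d dvd w2" "k1 \<in> K" "k2 \<in> K"
      and eq: "real_of_int w1 + k1 = real_of_int w2 + k2"
      unfolding T0_def T1_def D0_def D1_def by blast
    define t where "t = w2 - w1"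
    have t: "k1 - k2 = real_of_int t" using eq unfolding t_def by simp
    have nd: "\<not> d dvd t" using \<open>d dvd w1\<close> \<open>\<not> d dvd w2\<close> unfolding t_def
      by (metis dvd_add_left_iff diff_add_cancel)
    consider "t > 0" | "t = 0" | "t < 0" by linarith
    then show False
    proof cases
      case 1
      have "real_of_int t \<in> diff_set K" unfolding diff_set_def using t \<open>k1\<in>K\<close> \<open>k2\<in>K\<close> by force
      then show False using dv[OF 1] nd by simp
    next
      case 2 then show False using nd by simp
    next
      case 3
      have "real_of_int (-t) \<in> diff_set K"
      proof -
        have "real_of_int (-t) = k2 - k1" using t by simp
        then show ?thesis unfolding diff_set_def using \<open>k1\<in>K\<close> \<open>k2\<in>K\<close> by blast
      qed
      then have "d dvd -t" using dv[of "-t"] 3 by linarith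
      then show False using nd by simp
    qed
  qed
  obtain k where k: "k \<in> K" using cov by blast
  have "k \<in> T0" unfolding T0_def D0_def using k by force
  moreover have "1 + k \<in> T1"
  proof -
    have "(1::real) \<in> D1" unfolding D1_def using d
      by (auto intro!: exI[of _ 1] simp: zdvd_not_zless)
    then show ?thesis unfolding T1_def using k by blast
  qed
  ultimately show False
    using connected_UNIV[where 'a=real] c0 c1 cover disj
    unfolding connected_closed by blast
qed


lemma forward_constr:
  fixes S :: "int list" and A :: "int set"
  assumes len: "length S \<ge> 2" and sv: "\<forall>s\<in>set S. \<bar>s\<bar> \<in> A \<or> s = 0"
    and sum: "sum_list S = -1" and all: "\<forall>a\<in>A. \<exists>s\<in>set S. \<bar>s\<bar> = a"
    and pos: "\<forall>a\<in>A. a > 0"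
  shows "\<exists>K::real set. N_set K \<and> A = {n::int. n > 0 \<and> real_of_int n \<in> diff_set K}"
proof -
  define N where "N = length S"
  define m where "m = Suc N"
  define nn where "nn i = sum_list (take i S)" for i
  have m3: "m \<ge> 3" using len unfolding m_def N_def by simp
  have mpos: "real m > 0" using m3 by simp
  have nnS: "nn (Suc i) - nn i = S!i" if "i < N" for i
    using that unfolding nn_def N_def by (simp add: take_Suc_conv_app_nth)
  have nn0: "nn 0 = 0" unfolding nn_def by simp
  have nnN: "nn N = -1" unfolding nn_def N_def using sum by simp
  define I where "I i = {real i / real m .. real (Suc i) / real m}" for i
  define P where "P i = (\<lambda>x. x + real_of_int (nn i)) ` I i" for i
  define K where "K = (\<Union>i\<in>{..N}. P i)"
  have cK: "compact K" unfolding K_def P_def I_def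
    by (intro compact_UN) (auto intro: compact_translation)
  have cov: "\<exists>y\<in>K. x - y \<in> \<int>" for x :: real
  proof -
    define f where "f = frac x"
    have f: "0 \<le> f" "f < 1" unfolding f_def by (auto simp: frac_lt_1)
    define i where "i = nat \<lfloor>f * real m\<rfloor>"
    have fl: "real i \<le> f * real m" "f * real m < real i + 1"
      unfolding i_def using f mpos by auto
    have "f * real m < real m" using f mpos by simp
    then have "real i < real m" using fl by linarith
    then have iN: "i \<le> N" unfolding m_def by simp
    have "f \<in> I i" unfolding I_def using fl mpos by (auto simp: field_simps)
    then have "f + real_of_int (nn i) \<in> K" unfolding K_def P_def using iN by blast
    moreover have "x - (f + real_of_int (nn i)) \<in> \<int>"
      unfolding f_def frac_def by simp
    ultimately show ?thesis by blast
  qed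
  have NK: "N_set K" unfolding N_set_def using cK cov by blast
  have sub1: "a \<in> {n::int. n > 0 \<and> real_of_int n \<in> diff_set K}" if a: "a \<in> A" for a
  proof -
    obtain s where s: "s \<in> set S" "\<bar>s\<bar> = a" using all a by blast
    then obtain i where i: "i < N" "S!i = s" unfolding N_def by (auto simp: in_set_conv_nth)
    define p where "p = real (Suc i) / real m"
    have "p \<in> I i" "p \<in> I (Suc i)" unfolding p_def I_def using mpos
      by (auto simp: field_simps)
    then have u: "p + real_of_int (nn i) \<in> K" and v: "p + real_of_int (nn (Suc i)) \<in> K"
      unfolding K_def P_def using i by auto
    have d: "(p + real_of_int (nn (Suc i))) - (p + real_of_int (nn i)) = real_of_int s"
      using nnS[OF i(1)] i(2) by simp
    have "real_of_int a \<in> diff_set K"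
    proof (cases "s \<ge> 0")
      case True
      then have "real_of_int a = (p + real_of_int (nn (Suc i))) - (p + real_of_int (nn i))"
        using d s by simp
      then show ?thesis unfolding diff_set_def using u v by blast
    next
      case False
      then have "real_of_int a = (p + real_of_int (nn i)) - (p + real_of_int (nn (Suc i)))"
        using d s by simp
      then show ?thesis unfolding diff_set_def using u v by blast
    qed
    then show ?thesis using pos a by auto
  qed
  have sub2: "k \<in> A" if k: "k > 0" "real_of_int k \<in> diff_set K" for k
  proof -
    obtain u v where uv: "real_of_int k = u - v" "u \<in> K" "v \<in> K"
      using k(2) unfolding diff_set_def by blast
    obtain j y where j: "j \<le> N" "y \<in> I j" "u = y + real_of_int (nn j)"
      using uv(2) unfolding K_def P_def by auto
    obtain i x where i: "i \<le> N" "x \<in> I i" "v = x + real_of_int (nn i)"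
      using uv(3) unfolding K_def P_def by auto
    define z where "z = k - (nn j - nn i)"
    have zr: "real_of_int z = y - x" using uv(1) i(3) j(3) unfolding z_def by simp
    have xb: "real i \<le> x * real m" "x * real m \<le> real i + 1"
      using i(2) mpos unfolding I_def by (auto simp: field_simps)
    have yb: "real j \<le> y * real m" "y * real m \<le> real j + 1"
      using j(2) mpos unfolding I_def by (auto simp: field_simps)
    have zm: "real_of_int (z * int m) = y * real m - x * real m"
      using zr by (simp add: algebra_simps) (metis distrib_right)
    have "real_of_int (int j - int i - 1) \<le> real_of_int (z * int m)"
      "real_of_int (z * int m) \<le> real_of_int (int j - int i + 1)"
      using zm xb yb by simp_all
    then have z1: "int j - int i - 1 \<le> z * int m" "z * int m \<le> int j - int i + 1"
      by linarith+
    have cs: "(z=0 \<and> -1 \<le> int j - int i \<and> int j - int i \<le> 1) \<or> (z=1 \<and> int j - int i = int m-1)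
       \<or> (z=-1 \<and> int j - int i = -(int m-1))"
      using key_int[of "int m" "int j - int i" z] z1 m3 i(1) j(1) unfolding m_def by auto
    then consider "z = 0" "j = i" | "z = 0" "j = Suc i" | "z = 0" "i = Suc j"
      | "z = 1" "i = 0" "j = N" | "z = -1" "i = N" "j = 0"
      using i(1) j(1) unfolding m_def by linarith
    then show ?thesis
    proof cases
      case 1 then show ?thesis using z_def k by simp
    next
      case 2
      then have "k = S!i" "i < N" using z_def nnS[of i] j(1) by auto
      moreover have "S!i \<in> set S" using \<open>i < N\<close> unfolding N_def by simp
      ultimately show ?thesis using sv k(1) by fastforce
    next
      case 3
      then have "k = - (S!j)" "j < N" using z_def nnS[of j] i(1) by auto
      moreover have "S!j \<in> set S" using \<open>j < N\<close> unfolding N_def by simp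
      ultimately show ?thesis using sv k(1) by fastforce
    next
      case 4 then show ?thesis using z_def k nn0 nnN by simp
    next
      case 5 then show ?thesis using z_def k nn0 nnN by simp
    qed
  qed
  have "A = {n::int. n > 0 \<and> real_of_int n \<in> diff_set K}"
    using sub1 sub2 by blast
  then show ?thesis using NK by blast
qed


definition realz :: "int set \<Rightarrow> int \<Rightarrow> bool" where
  "realz A t \<longleftrightarrow> (\<exists>L. (\<forall>s\<in>set L. \<bar>s\<bar> \<in> A) \<and> sum_list L = t)"

lemma sum_list_neg_map: "sum_list (map uminus (L::int list)) = - sum_list L"
  by (induction L) auto

lemma realz_0: "realz A 0" unfolding realz_def by (auto intro!: exI[of _ "[]"])
lemma realz_el: "a \<in> A \<Longrightarrow> a > 0 \<Longrightarrow> realz A a"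
  unfolding realz_def by (auto intro!: exI[of _ "[a]"])
lemma realz_add: "realz A s \<Longrightarrow> realz A t \<Longrightarrow> realz A (s + t)"
  unfolding realz_def
proof (elim exE conjE)
  fix L M assume "\<forall>s\<in>set L. \<bar>s\<bar> \<in> A" "sum_list L = s" "\<forall>s\<in>set M. \<bar>s\<bar> \<in> A" "sum_list M = t"
  then show "\<exists>L. (\<forall>s\<in>set L. \<bar>s\<bar> \<in> A) \<and> sum_list L = s + t"
    by (intro exI[of _ "L @ M"]) auto
qed
lemma realz_neg: "realz A s \<Longrightarrow> realz A (- s)"
  unfolding realz_def
proof (elim exE conjE)
  fix L assume "\<forall>s\<in>set L. \<bar>s\<bar> \<in> A" "sum_list L = s"
  then show "\<exists>L. (\<forall>s\<in>set L. \<bar>s\<bar> \<in> A) \<and> sum_list L = - s"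
    by (intro exI[of _ "map uminus L"]) (auto simp: sum_list_neg_map)
qed
lemma realz_mono: "realz A s \<Longrightarrow> A \<subseteq> B \<Longrightarrow> realz B s"
  unfolding realz_def by blast
lemma realz_natmult: "realz A s \<Longrightarrow> realz A (int n * s)"
proof (induction n)
  case 0 then show ?case by (simp add: realz_0)
next
  case (Suc n)
  have "int (Suc n) * s = s + int n * s" by (simp add: distrib_right)
  then show ?case using Suc realz_add by metis
qed
lemma realz_mult: "realz A s \<Longrightarrow> realz A (k * s)"
proof (cases "k \<ge> 0")
  case True
  then have "k = int (nat k)" by simp
  then show "realz A s \<Longrightarrow> realz A (k * s)" by (metis realz_natmult)
next
  case False
  then have "k = - int (nat (-k))" by simp
  then show "realz A s \<Longrightarrow> realz A (k * s)"
    by (metis realz_natmult realz_neg mult_minus_left)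
qed

lemma realz_gcd:
  assumes "finite A" "\<forall>a\<in>A. a > 0"
  shows "\<exists>g. realz A g \<and> (\<forall>a\<in>A. g dvd a)"
  using assms
proof (induction A rule: finite_induct)
  case empty then show ?case using realz_0 by blast
next
  case (insert a F)
  then obtain g where g: "realz F g" "\<forall>b\<in>F. g dvd b" by auto
  obtain u v where uv: "u * a + v * g = gcd a g" using bezout_int by blast
  have ga: "realz (insert a F) g" using g(1) realz_mono by blast
  have aa: "realz (insert a F) a" using insert.prems by (auto intro: realz_el)
  have "realz (insert a F) (gcd a g)" unfolding uv[symmetric]
    using ga aa by (intro realz_add realz_mult)
  moreover have "\<forall>b\<in>insert a F. gcd a g dvd b"
  proof
    fix b assume "b \<in> insert a F"
    then show "gcd a g dvd b"
    proof
      assume "b = a" then show ?thesis by simp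
    next
      assume "b \<in> F" then have "g dvd b" using g(2) by blast
      then show ?thesis using gcd_dvd2 dvd_trans by blast
    qed
  qed
  ultimately show ?case by blast
qed

theorem theorem1:
  fixes A :: "int set"
  assumes "finite A" and "\<forall>a\<in>A. a > 0"
  shows "rel_prime_set A \<longleftrightarrow>
    (\<exists>K::real set. N_set K \<and> A = {n::int. n > 0 \<and> real_of_int n \<in> diff_set K})"
proof
  assume rp: "rel_prime_set A"
  obtain g where g: "realz A g" "\<forall>a\<in>A. g dvd a" using realz_gcd assms by blast
  have ne: "A \<noteq> {}" using rp unfolding rel_prime_set_def by blast
  have "\<bar>g\<bar> = 1"
  proof -
    have "\<forall>a\<in>A. \<bar>g\<bar> dvd a" using g(2) by simp
    then have "\<not> \<bar>g\<bar> > 1" using rp unfolding rel_prime_set_def by blast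
    moreover have "g \<noteq> 0"
    proof
      assume "g = 0"
      obtain a where "a \<in> A" using ne by blast
      then have "a = 0" "a > 0" using g(2) assms(2) \<open>g = 0\<close> by auto
      then show False by simp
    qed
    ultimately show ?thesis by linarith
  qed
  then have "realz A (-1)"
  proof (cases "g \<ge> 0")
    case True then have "g = 1" using \<open>\<bar>g\<bar> = 1\<close> by simp
    then show ?thesis using g(1) realz_neg by metis
  next
    case False then have "g = -1" using \<open>\<bar>g\<bar> = 1\<close> by simp
    then show ?thesis using g(1) by simp
  qed
  then obtain L where L: "\<forall>s\<in>set L. \<bar>s\<bar> \<in> A" "sum_list L = -1" unfolding realz_def by blast
  define La where "La = sorted_list_of_set A"
  have sLa: "set La = A" unfolding La_def using assms(1) by simp
  define S where "S = La @ map uminus La @ L @ [0, 0]"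
  have "length S \<ge> 2" unfolding S_def by simp
  moreover have "\<forall>s\<in>set S. \<bar>s\<bar> \<in> A \<or> s = 0"
  proof
    fix s assume "s \<in> set S"
    then consider "s \<in> set La" | "s \<in> uminus ` set La" | "s \<in> set L" | "s = 0"
      unfolding S_def by auto
    then show "\<bar>s\<bar> \<in> A \<or> s = 0"
    proof cases
      case 1 then show ?thesis using sLa assms(2) by auto
    next
      case 2 then obtain b where "s = - b" "b \<in> A" using sLa by auto
      then show ?thesis using assms(2) by auto
    next
      case 3 then show ?thesis using L(1) by blast
    qed simp
  qed
  moreover have "sum_list S = -1" unfolding S_def using L(2) by (simp add: sum_list_neg_map)
  moreover have "\<forall>a\<in>A. \<exists>s\<in>set S. \<bar>s\<bar> = a"
  proof
    fix a assume "a \<in> A"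
    then have "a \<in> set S" "\<bar>a\<bar> = a" unfolding S_def using sLa assms(2) by auto
    then show "\<exists>s\<in>set S. \<bar>s\<bar> = a" by blast
  qed
  ultimately show "\<exists>K::real set. N_set K \<and> A = {n::int. n > 0 \<and> real_of_int n \<in> diff_set K}"
    by (rule forward_constr[OF _ _ _ _ assms(2)])
next
  assume "\<exists>K::real set. N_set K \<and> A = {n::int. n > 0 \<and> real_of_int n \<in> diff_set K}"
  then obtain K where K: "N_set K" "A = {n::int. n > 0 \<and> real_of_int n \<in> diff_set K}" by blast
  have nd: "\<not> (\<forall>a\<in>A. d dvd a)" if "d > 1" for d
    using backward[OF K(1) that] K(2) by blast
  have "A \<noteq> {}"
  proof
    assume "A = {}" then show False using nd[of 2] by simp
  qed
  then show "rel_prime_set A" unfolding rel_prime_set_def using nd by simp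
qed

end
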